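(* Let $\mathfrak{W}$ be the Witt algebra and let $\bigwedge^2\mathfrak{W}$ carry the $\mathfrak{W}$-module structure induced by the adjoint action. Then the first Chevalley–Eilenberg cohomology vanishes: $$H^1\big(\mathfrak{W},\textstyle\bigwedge^2\mathfrak{W}\big)=\{0\}.$$ Equivalently: for every linear map $\delta:\mathfrak{W}\to\bigwedge^2\mathfrak{W}$ satisfying $$\delta([x,y]) = x\cdot\delta(y) - y\cdot\delta(x)\quad\text{for all } x,y\in\mathfrak{W},$$ there exists $r\in\bigwedge^2\mathfrak{W}$ such that $\delta(x)=x\cdot r$ for all $x\in\mathfrak{W}$.
   Context: The Witt algebra $\mathfrak{W}$ is the complex Lie algebra with basis $\{L_m : m\in\mathbb{Z}\}$ (elements are finite linear combinations) and bracket $[L_m,L_n]=(m-n)L_{m+n}$. The exterior square $\bigwedge^2\mathfrak{W}$ (finite sums of elements $a\wedge b = a\otimes b - b\otimes a$) is a $\mathfrak{W}$-module via $x\cdot(a\wedge b)=[x,a]\wedge b + a\wedge[x,b]$, i.e. $x\cdot t=[x\otimes 1+1\otimes x,\,t]$. A 1-cocycle is a linear map $\delta:\mathfrak{W}\to\bigwedge^2\mathfrak{W}$ with $\delta([x,y])=x\cdot\delta(y)-y\cdot\delta(x)$; a 1-coboundary is a map of the form $x\mapsto x\cdot r$ for a fixed $r\in\bigwedge^2\mathfrak{W}$; $H^1$ is the quotient of 1-cocycles by 1-coboundaries. *)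

theory Defs
  imports Complex_Main
begin

text \<open>Elements of the Witt algebra: finitely supported coefficient functions
  \<open>a :: int \<Rightarrow> complex\<close>, representing \<open>\<Sum>m. a m L_m\<close>.\<close>

definition witt :: "(int \<Rightarrow> complex) set" where
  "witt = {a. finite {m. a m \<noteq> 0}}"

definition L :: "int \<Rightarrow> int \<Rightarrow> complex" where
  "L m = (\<lambda>k. if k = m then 1 else 0)"

text \<open>Lie bracket, bilinear extension of \<open>[L_m,L_n] = (m-n) L_(m+n)\<close>.\<close>
definition wbr :: "(int \<Rightarrow> complex) \<Rightarrow> (int \<Rightarrow> complex) \<Rightarrow> (int \<Rightarrow> complex)" where
  "wbr a b = (\<lambda>k. \<Sum>m\<in>{m. a m \<noteq> 0}. of_int (m - (k - m)) * a m * b (k - m))"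

text \<open>Tensor square \<open>W \<otimes> W\<close>: finitely supported functions on \<open>int \<times> int\<close>
  (coefficients with respect to the basis \<open>L_i \<otimes> L_j\<close>).\<close>
definition tens :: "(int \<Rightarrow> complex) \<Rightarrow> (int \<Rightarrow> complex) \<Rightarrow> (int \<times> int \<Rightarrow> complex)" where
  "tens a b = (\<lambda>(i, j). a i * b j)"

definition wedge :: "(int \<Rightarrow> complex) \<Rightarrow> (int \<Rightarrow> complex) \<Rightarrow> (int \<times> int \<Rightarrow> complex)" where
  "wedge a b = (\<lambda>p. tens a b p - tens b a p)"

definition ext2 :: "(int \<times> int \<Rightarrow> complex) set" where
  "ext2 = {t. \<exists>S c. finite S \<and> S \<subseteq> witt \<times> witt \<and>
              t = (\<lambda>p. \<Sum>(a, b)\<in>S. c (a, b) * wedge a b p)}"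

text \<open>Action \<open>x \<cdot> t\<close>, the linear extension of
  \<open>x \<cdot> (L_i \<otimes> L_j) = [x,L_i] \<otimes> L_j + L_i \<otimes> [x,L_j]\<close>.\<close>
definition act :: "(int \<Rightarrow> complex) \<Rightarrow> (int \<times> int \<Rightarrow> complex) \<Rightarrow> (int \<times> int \<Rightarrow> complex)" where
  "act x t = (\<lambda>p. \<Sum>(i, j)\<in>{q. t q \<noteq> 0}.
       t (i, j) * (tens (wbr x (L i)) (L j) p + tens (L i) (wbr x (L j)) p))"

end

theory Submission
  imports Defs
begin

definition Lact :: "int \<Rightarrow> (int \<times> int \<Rightarrow> complex) \<Rightarrow> (int \<times> int \<Rightarrow> complex)" where
  "Lact m t = (\<lambda>(p,q). of_int (2*m-p) * t (p-m,q) + of_int (2*m-q) * t (p,q-m))"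

lemma Lact_apply: "Lact m t (p,q) = of_int (2*m-p) * t (p-m,q) + of_int (2*m-q) * t (p,q-m)"
  by (simp add: Lact_def)

lemma Lact_diff: "Lact m (\<lambda>z. a z - b z) z = Lact m a z - Lact m b z"
  by (cases z) (simp add: Lact_apply algebra_simps)

lemma Lact_add: "Lact m (\<lambda>z. a z + b z) z = Lact m a z + Lact m b z"
  by (cases z) (simp add: Lact_apply algebra_simps)

lemma jacobi:
  "Lact m (Lact n t) z - Lact n (Lact m t) z = of_int (m-n) * Lact (m+n) t z"
proof (cases z)
  case (Pair p q)
  have a1: "p - n - m = p - (m+n)" "p - m - n = p - (m+n)" "q - n - m = q - (m+n)" "q - m - n = q - (m+n)"
    by simp_all
  show ?thesis unfolding Pair Lact_apply a1
    by (simp add: algebra_simps)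
qed

lemma fin_diff: "finite {z. a z \<noteq> 0} \<Longrightarrow> finite {z. b z \<noteq> 0} \<Longrightarrow> finite {z. a z - b z \<noteq> (0::complex)}"
  by (rule finite_subset[of _ "{z. a z \<noteq> 0} \<union> {z. b z \<noteq> 0}"]) auto

lemma fin_add: "finite {z. a z \<noteq> 0} \<Longrightarrow> finite {z. b z \<noteq> 0} \<Longrightarrow> finite {z. a z + b z \<noteq> (0::complex)}"
  by (rule finite_subset[of _ "{z. a z \<noteq> 0} \<union> {z. b z \<noteq> 0}"]) auto

lemma fin_Lact:
  assumes "finite {z. t z \<noteq> 0}"
  shows "finite {z. Lact m t z \<noteq> 0}"
proof -
  let ?S = "{z. t z \<noteq> 0}"
  have "{z. Lact m t z \<noteq> 0} \<subseteq> (\<lambda>(a,b). (a+m,b)) ` ?S \<union> (\<lambda>(a,b). (a,b+m)) ` ?S"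
  proof
    fix z assume z: "z \<in> {z. Lact m t z \<noteq> 0}"
    obtain p q where zz: "z = (p,q)" by (cases z)
    from z have "t (p-m,q) \<noteq> 0 \<or> t (p,q-m) \<noteq> 0" by (auto simp: zz Lact_apply)
    then show "z \<in> (\<lambda>(a,b). (a+m,b)) ` ?S \<union> (\<lambda>(a,b). (a,b+m)) ` ?S"
    proof
      assume "t (p-m,q) \<noteq> 0"
      then have "(p-m,q) \<in> ?S" by simp
      then have "(\<lambda>(a,b). (a+m,b)) (p-m,q) \<in> (\<lambda>(a,b). (a+m,b)) ` ?S" by (rule imageI)
      then show ?thesis by (simp add: zz)
    next
      assume "t (p,q-m) \<noteq> 0"
      then have "(p,q-m) \<in> ?S" by simp
      then have "(\<lambda>(a,b). (a,b+m)) (p,q-m) \<in> (\<lambda>(a,b). (a,b+m)) ` ?S" by (rule imageI)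
      then show ?thesis by (simp add: zz)
    qed
  qed
  moreover have "finite ((\<lambda>(a,b). (a+m,b)) ` ?S \<union> (\<lambda>(a,b). (a,b+m)) ` ?S)"
    using assms by simp
  ultimately show ?thesis by (rule finite_subset)
qed

lemma kill:
  fixes t :: "int \<times> int \<Rightarrow> complex"
  assumes fin: "finite {z. t z \<noteq> 0}"
    and k: "\<And>m. m \<ge> mz \<Longrightarrow> Lact m t = (\<lambda>z. 0)"
  shows "t = (\<lambda>z. 0)"
proof
  fix z :: "int \<times> int"
  obtain p q where zz: "z = (p,q)" by (cases z)
  let ?S = "{z. t z \<noteq> 0}"
  define B where "B = Max (insert 0 ((\<lambda>z. \<bar>fst z\<bar>) ` ?S))"
  have B: "\<And>z. t z \<noteq> 0 \<Longrightarrow> \<bar>fst z\<bar> \<le> B"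
    unfolding B_def using fin by (intro Max_ge) auto
  define m where "m = max mz (B + \<bar>p\<bar> + \<bar>q\<bar> + 1)"
  have "m \<ge> mz" by (simp add: m_def)
  then have "Lact m t (p, q+m) = 0" using k by simp
  moreover have "t (p-m, q+m) = 0"
  proof (rule ccontr)
    assume "t (p-m, q+m) \<noteq> 0"
    then have "\<bar>p - m\<bar> \<le> B" using B[of "(p-m,q+m)"] by simp
    moreover have "B \<ge> 0" unfolding B_def using fin by (intro Max_ge) auto
    ultimately show False unfolding m_def by linarith
  qed
  moreover have "m - q \<noteq> 0"
  proof -
    have "B \<ge> 0" unfolding B_def using fin by (intro Max_ge) auto
    then show ?thesis unfolding m_def by linarith
  qed
  ultimately have "of_int (m - q) * t (p,q) = 0"
    by (simp add: Lact_apply algebra_simps)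
  then show "t z = 0" using \<open>m - q \<noteq> 0\<close> by (simp add: zz)
qed

definition cocyc :: "(int \<Rightarrow> int \<times> int \<Rightarrow> complex) \<Rightarrow> bool" where
  "cocyc D \<longleftrightarrow> (\<forall>m n z. of_int (m-n) * D (m+n) z = Lact m (D n) z - Lact n (D m) z)"

lemma cocyc_sub:
  assumes "cocyc D"
  shows "cocyc (\<lambda>m z. D m z - Lact m r z)"
  unfolding cocyc_def
proof (intro allI)
  fix m n z
  have j: "Lact m (Lact n r) z - Lact n (Lact m r) z = of_int (m-n) * Lact (m+n) r z"
    by (rule jacobi)
  have c: "of_int (m-n) * D (m+n) z = Lact m (D n) z - Lact n (D m) z"
    using assms unfolding cocyc_def by blast
  show "of_int (m-n) * (D (m+n) z - Lact (m+n) r z) =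
      Lact m (\<lambda>z. D n z - Lact n r z) z - Lact n (\<lambda>z. D m z - Lact m r z) z"
    unfolding Lact_diff using j c by (simp add: algebra_simps)
qed

lemma hom_cc:
  assumes "cocyc X" and hom: "\<And>m p q. p + q \<noteq> m \<Longrightarrow> X m (p,q) = 0"
  shows "of_int (m-n) * X (m+n) (p, (m+n)-p) =
     of_int (2*m-p) * X n (p-m, n-(p-m)) + of_int (m-n+p) * X n (p, n-p)
   - of_int (2*n-p) * X m (p-n, m-(p-n)) - of_int (n-m+p) * X m (p, m-p)"
proof -
  have c: "of_int (m-n) * X (m+n) (p, (m+n)-p) = Lact m (X n) (p, (m+n)-p) - Lact n (X m) (p, (m+n)-p)"
    using assms(1) unfolding cocyc_def by blast
  have "(p-m, m+n-p) = (p-m, n-(p-m))" "(p, m+n-p-m) = (p, n-p)" "(p-n, m+n-p) = (p-n, m-(p-n))"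
    "(p, m+n-p-n) = (p, m-p)" by simp_all
  then have a: "X n (p-m, m+n-p) = X n (p-m, n-(p-m))" "X n (p, m+n-p-m) = X n (p, n-p)"
    "X m (p-n, m+n-p) = X m (p-n, m-(p-n))" "X m (p, m+n-p-n) = X m (p, m-p)" by metis+
  have b: "complex_of_int (2*m - (m+n-p)) = of_int (m - n + p)" "complex_of_int (2*n - (m+n-p)) = of_int (n - m + p)"
    by simp_all
  show ?thesis using c unfolding Lact_apply a b by simp
qed

lemma bound_int:
  assumes "finite (S :: (int \<times> int) set)"
  shows "\<exists>K\<ge>0. \<forall>z\<in>S. \<bar>fst z\<bar> \<le> K"
proof -
  define K where "K = Max (insert 0 ((\<lambda>z. \<bar>fst z\<bar>) ` S))"
  have "\<forall>z\<in>S. \<bar>fst z\<bar> \<le> K" unfolding K_def using assms by (intro ballI Max_ge) auto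
  moreover have "K \<ge> 0" unfolding K_def using assms by (intro Max_ge) auto
  ultimately show ?thesis by blast
qed

lemma stepA:
  fixes D :: "int \<Rightarrow> int \<times> int \<Rightarrow> complex"
  assumes fin: "\<And>m. finite {z. D m z \<noteq> 0}" and cc: "cocyc D"
  shows "\<exists>r1. finite {z. r1 z \<noteq> 0} \<and> (\<forall>m p q. p + q \<noteq> m \<longrightarrow> D m (p,q) - Lact m r1 (p,q) = 0)
     \<and> (\<forall>z. D 0 z - Lact 0 r1 z = 0)"
proof -
  define r1 where "r1 = (\<lambda>(p,q). if p + q = 0 then 0 else - D 0 (p,q) / of_int (p+q))"
  define D1 where "D1 = (\<lambda>m z. D m z - Lact m r1 z)"
  have fr1: "finite {z. r1 z \<noteq> 0}"
    by (rule finite_subset[OF _ fin[of 0]]) (auto simp: r1_def split: if_splits)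
  have fin1: "finite {z. D1 m z \<noteq> 0}" for m
    unfolding D1_def by (intro fin_diff fin fin_Lact fr1)
  have cc1: "cocyc D1" unfolding D1_def by (rule cocyc_sub[OF cc])
  have D10: "D1 0 (p,q) = (if p + q = 0 then D 0 (p,q) else 0)" for p q
  proof -
    have L0: "Lact 0 r1 (p,q) = - of_int (p+q) * r1 (p,q)" by (simp add: Lact_apply algebra_simps)
    show ?thesis
    proof (cases "p + q = 0")
      case True
      then show ?thesis using L0 by (simp add: D1_def r1_def)
    next
      case False
      then have nz: "of_int (p+q) \<noteq> (0::complex)" by (simp only: of_int_eq_0_iff) simp
      have "r1 (p,q) = - D 0 (p,q) / of_int (p+q)" using False by (simp add: r1_def)
      then have "Lact 0 r1 (p,q) = D 0 (p,q)" using L0 nz by (simp del: of_int_add)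
      then show ?thesis using False by (simp add: D1_def)
    qed
  qed
  have main: "of_int (m - p - q) * D1 m (p,q) = Lact m (D1 0) (p,q)" for m p q
  proof -
    have "of_int (m-0) * D1 (m+0) (p,q) = Lact m (D1 0) (p,q) - Lact 0 (D1 m) (p,q)"
      using cc1 unfolding cocyc_def by blast
    moreover have "Lact 0 (D1 m) (p,q) = - of_int (p+q) * D1 m (p,q)" by (simp add: Lact_apply algebra_simps)
    ultimately show ?thesis by (simp add: algebra_simps)
  qed
  have LD0: "Lact m (D1 0) (p,q) = 0" if "p + q \<noteq> m" for m p q
    using that by (simp add: Lact_apply D10)
  have hom: "D1 m (p,q) = 0" if "p + q \<noteq> m" for m p q
  proof -
    have "of_int (m - p - q) * D1 m (p,q) = 0" using main LD0 that by simp
    moreover have "of_int (m - p - q) \<noteq> (0::complex)" using that by (simp only: of_int_eq_0_iff)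
    ultimately show ?thesis by simp
  qed
  have "Lact m (D1 0) = (\<lambda>z. 0)" for m
  proof
    fix z :: "int \<times> int"
    obtain p q where zz: "z = (p,q)" by (cases z)
    show "Lact m (D1 0) z = 0"
    proof (cases "p + q = m")
      case True
      then have e: "m - p - q = 0" by simp
      show ?thesis using main[of m p q, unfolded e] by (simp add: zz)
    next
      case False
      then show ?thesis using LD0 by (simp add: zz)
    qed
  qed
  then have "D1 0 = (\<lambda>z. 0)" by (intro kill[OF fin1]) auto
  then show ?thesis using fr1 hom unfolding D1_def by (metis)
qed

lemma psum:
  fixes h :: "int \<Rightarrow> complex"
  assumes "\<And>k. k < -K \<Longrightarrow> h k = 0"
  shows "(\<Sum>k\<in>{-K..p}. h k) = (\<Sum>k\<in>{-K..p-1}. h k) + h p"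
proof (cases "p < -K")
  case True
  then show ?thesis using assms by simp
next
  case False
  then have "{-K..p} = insert p {-K..p-1}" by auto
  then show ?thesis by simp
qed

lemma stepB:
  fixes D1 :: "int \<Rightarrow> int \<times> int \<Rightarrow> complex"
  assumes fin: "\<And>m. finite {z. D1 m z \<noteq> 0}" and cc: "cocyc D1"
    and hom: "\<And>m p q. p + q \<noteq> m \<Longrightarrow> D1 m (p,q) = 0" and z0: "\<And>z. D1 0 z = 0"
  shows "\<exists>r2. finite {z. r2 z \<noteq> 0} \<and> (\<forall>m. D1 m = Lact m r2)"
proof -
  have "finite ({z. D1 1 z \<noteq> 0} \<union> {z. D1 2 z \<noteq> 0} \<union> {z. D1 (-1) z \<noteq> 0} \<union> {z. D1 (-2) z \<noteq> 0})"
    using fin by simp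
  from bound_int[OF this] obtain K where K0: "K \<ge> 0" and KS0: "\<forall>z\<in>{z. D1 1 z \<noteq> 0} \<union> {z. D1 2 z \<noteq> 0} \<union> {z. D1 (-1) z \<noteq> 0} \<union> {z. D1 (-2) z \<noteq> 0}. \<bar>fst z\<bar> \<le> K"
    by (elim exE conjE)
  note KS = KS0[rule_format]
  define F where "F = (\<lambda>m p. D1 m (p, m - p))"
  have FK: "F m p = 0" if "m = 1 \<or> m = 2 \<or> m = -1 \<or> m = -2" "K < \<bar>p\<bar>" for m p
  proof (rule ccontr)
    assume "F m p \<noteq> 0"
    then have "(p, m-p) \<in> {z. D1 1 z \<noteq> 0} \<union> {z. D1 2 z \<noteq> 0} \<union> {z. D1 (-1) z \<noteq> 0} \<union> {z. D1 (-2) z \<noteq> 0}"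
      using that(1) unfolding F_def by auto
    then have "\<bar>fst (p, m-p)\<bar> \<le> K" by (rule KS)
    then show False using that(2) by simp
  qed
  define g where "g = (\<lambda>p. F 2 p - F 1 p - F 1 (p-1))"
  have gL: "g p = 0" if "p < -K" for p using FK[of 1 p] FK[of 2 p] FK[of 1 "p-1"] that K0 unfolding g_def by simp
  have gU: "g p = 0" if "p > K + 1" for p using FK[of 1 p] FK[of 2 p] FK[of 1 "p-1"] that K0 unfolding g_def by simp
  define S where "S = (\<lambda>j. \<Sum>k\<in>{-K..j}. g k)"
  define c where "c = (\<lambda>p. \<Sum>j\<in>{-K..p}. S j)"
  have SL: "S j = 0" if "j < -K" for j using that by (simp add: S_def)
  have cL: "c p = 0" if "p < -K" for p using that by (simp add: c_def)
  have Srec: "S p = S (p-1) + g p" for p unfolding S_def by (rule psum) (rule gL)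
  have crec0: "c p = c (p-1) + S p" for p unfolding c_def by (rule psum) (rule SL)
  have crec: "c p - 2 * c (p-1) + c (p-2) = g p" for p
    using crec0[of p] crec0[of "p-1"] Srec[of p] by simp
  define r2 where "r2 = (\<lambda>(p,q). if p + q = 0 then c p else 0)"
  define D2 where "D2 = (\<lambda>m z. D1 m z - Lact m r2 z)"
  have cc2: "cocyc D2" unfolding D2_def by (rule cocyc_sub[OF cc])
  have Lr2: "Lact m r2 (p,q) = (if p + q = m then of_int (2*m-p) * c (p-m) + of_int (m+p) * c p else 0)" for m p q
  proof (cases "p + q = m")
    case True
    then have "q = m - p" by simp
    then show ?thesis by (simp add: Lact_apply r2_def)
  next
    case False
    then show ?thesis by (simp add: Lact_apply r2_def)
  qed
  have hom2: "D2 m (p,q) = 0" if "p + q \<noteq> m" for m p q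
    using that hom[OF that] by (simp add: D2_def Lr2)
  define e where "e = (\<lambda>m p. D2 m (p, m - p))"
  have ef: "e m p = F m p - (of_int (2*m-p) * c (p-m) + of_int (m+p) * c p)" for m p
    by (simp add: e_def D2_def F_def Lr2)
  have ecc: "of_int (m-n) * e (m+n) p =
     of_int (2*m-p) * e n (p-m) + of_int (m-n+p) * e n p
   - of_int (2*n-p) * e m (p-n) - of_int (n-m+p) * e m p" for m n p
    unfolding e_def by (rule hom_cc[OF cc2 hom2])
  have e0: "e 0 p = 0" for p
    using z0 by (simp add: ef F_def)
  have e2: "e 2 p = e 1 p + e 1 (p-1)" for p
  proof -
    have "g p = c p - 2 * c (p-1) + c (p-2)" using crec[of p] by simp
    then show ?thesis unfolding ef g_def by (simp add: algebra_simps)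
  qed
  have R1: "of_int (2-p) * e (-1) (p-1) + of_int (2+p) * e (-1) p + of_int (2+p) * e 1 (p+1)
      - of_int (p-2) * e 1 p = 0" for p
    using ecc[of 1 "-1" p] e0[of p] by (simp add: algebra_simps)
  have R2: "3 * e 1 p = of_int (4-p) * e (-1) (p-2) + of_int (3+p) * e (-1) p
      + of_int (2+p) * (e 1 (p+1) + e 1 p) - of_int (p-3) * (e 1 p + e 1 (p-1))" for p
    using ecc[of 2 "-1" p] e2[of "p+1"] e2[of p] by (simp add: algebra_simps)
  have R3: "3 * e (-1) p = of_int (2-p) * e (-2) (p-1) + of_int (3+p) * e (-2) p
      + of_int (4+p) * e 1 (p+2) - of_int (p-3) * e 1 p" for p
    using ecc[of 1 "-2" p] by (simp add: algebra_simps)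
  have R4: "of_int (4-p) * e (-2) (p-2) + of_int (4+p) * e (-2) p
      + of_int (4+p) * (e 1 (p+2) + e 1 (p+1)) - of_int (p-4) * (e 1 p + e 1 (p-1)) = 0" for p
    using ecc[of 2 "-2" p] e2[of "p+2"] e2[of p] e0[of p] by (simp add: algebra_simps)
  have lowz: "e 1 q = 0 \<and> e (-1) q = 0 \<and> e (-2) q = 0" if "q < -K-2" for q
  proof -
    have "F 1 q = 0" "F (-1) q = 0" "F (-2) q = 0" using FK that K0 by auto
    moreover have "c q = 0" "c (q-1) = 0" "c (q+1) = 0" "c (q+2) = 0" using cL that by auto
    ultimately show ?thesis by (simp add: ef)
  qed
  have ind: "\<forall>q < -K-2 + int n. e 1 q = 0 \<and> e (-1) q = 0 \<and> e (-2) q = 0" for n :: nat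
  proof (induction n)
    case 0
    then show ?case using lowz by simp
  next
    case (Suc n)
    define p where "p = -K-2 + int n"
    have IH: "e 1 q = 0" "e (-1) q = 0" "e (-2) q = 0" if "q < p" for q
      using Suc.IH that unfolding p_def by auto
    have z1: "e 1 (p-1) = 0" "e 1 (p-2) = 0" "e (-1) (p-1) = 0" "e (-1) (p-2) = 0"
      "e (-2) (p-1) = 0" "e (-2) (p-2) = 0" "e (-2) (p-3) = 0" using IH by auto
    have A: "(of_int p + 1) * e 1 p = 0" using R1[of "p-1"] z1 by (simp add: algebra_simps)
    have B: "(of_int p + 2) * e 1 p = 0" using R3[of "p-2"] z1 by (simp add: algebra_simps)
    have up: "e 1 p = 0"
    proof -
      have "e 1 p = (of_int p + 2) * e 1 p - (of_int p + 1) * e 1 p" by (simp add: algebra_simps)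
      then show ?thesis using A B by simp
    qed
    have C1: "(of_int p + 2) * e (-1) p + (of_int p + 2) * e 1 (p+1) = 0"
      using R1[of p] z1 up by (simp add: algebra_simps)
    have C2: "(of_int p + 3) * e (-1) p + (of_int p + 2) * e 1 (p+1) = 0"
      using R2[of p] z1 up by (simp add: algebra_simps)
    have vp: "e (-1) p = 0"
    proof -
      have "e (-1) p = ((of_int p + 3) * e (-1) p + (of_int p + 2) * e 1 (p+1))
         - ((of_int p + 2) * e (-1) p + (of_int p + 2) * e 1 (p+1))" by (simp add: algebra_simps)
      then show ?thesis using C1 C2 by simp
    qed
    have D1': "(of_int p + 2) * e 1 (p+1) = 0" using C1 vp by simp
    have D2': "(of_int p + 3) * e 1 (p+1) = 0" using R3[of "p-1"] z1 up by (simp add: algebra_simps)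
    have up1: "e 1 (p+1) = 0"
    proof -
      have "e 1 (p+1) = (of_int p + 3) * e 1 (p+1) - (of_int p + 2) * e 1 (p+1)" by (simp add: algebra_simps)
      then show ?thesis using D1' D2' by simp
    qed
    have E1: "(of_int p + 3) * e (-2) p + (of_int p + 4) * e 1 (p+2) = 0"
      using R3[of p] z1 up vp by (simp add: algebra_simps)
    have E2: "(of_int p + 4) * e (-2) p + (of_int p + 4) * e 1 (p+2) = 0"
      using R4[of p] z1 up up1 by (simp add: algebra_simps)
    have wp: "e (-2) p = 0"
    proof -
      have "e (-2) p = ((of_int p + 4) * e (-2) p + (of_int p + 4) * e 1 (p+2))
         - ((of_int p + 3) * e (-2) p + (of_int p + 4) * e 1 (p+2))" by (simp add: algebra_simps)
      then show ?thesis using E1 E2 by simp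
    qed
    show ?case
    proof (intro allI impI)
      fix q assume "q < -K-2 + int (Suc n)"
      then have "q < p \<or> q = p" unfolding p_def by auto
      then show "e 1 q = 0 \<and> e (-1) q = 0 \<and> e (-2) q = 0" using IH up vp wp by auto
    qed
  qed
  have u0: "e 1 q = 0" for q
    using ind[of "nat (q + K + 3)"] by auto
  have lc1: "of_int (2-t) * c (t-1) + of_int (1+t) * c t = 0" if "t > K" for t
  proof -
    have "F 1 t = 0" using FK that K0 by auto
    then have "- ((2 - complex_of_int t) * c (t - 1)) = (1 + complex_of_int t) * c t"
      using u0[of t] by (simp add: ef)
    then show ?thesis by (simp add: algebra_simps)
  qed
  have cU: "c q = 0" if "q > K" for q
  proof -
    define p where "p = q + 2"
    have q: "q = p - 2" unfolding p_def by simp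
    have eq1: "of_int (3-p) * c (p-2) + of_int p * c (p-1) = 0"
      using lc1[of "p-1"] that unfolding p_def by (simp add: algebra_simps)
    have eq2: "of_int (2-p) * c (p-1) + of_int (1+p) * c p = 0"
      using lc1[of p] that unfolding p_def by (simp add: algebra_simps)
    have eq3: "c p - 2 * c (p-1) + c (p-2) = 0"
      using crec[of p] gU[of p] that unfolding p_def by simp
    have "12 * c (p-2) = of_int p * of_int (p+1) * (c p - 2 * c (p-1) + c (p-2))
        - of_int p * (of_int (2-p) * c (p-1) + of_int (1+p) * c p)
        + of_int (p+4) * (of_int (3-p) * c (p-2) + of_int p * c (p-1))"
      by (simp add: algebra_simps)
    then have "12 * c (p-2) = 0" using eq1 eq2 eq3 by simp
    then show ?thesis using q by simp
  qed
  have fr2: "finite {z. r2 z \<noteq> 0}"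
  proof (rule finite_subset)
    show "{z. r2 z \<noteq> 0} \<subseteq> (\<lambda>p. (p, -p)) ` {-K..K}"
    proof
      fix z assume "z \<in> {z. r2 z \<noteq> 0}"
      then obtain p q where zz: "z = (p,q)" and nz: "r2 (p,q) \<noteq> 0" by (cases z) auto
      then have pq: "p + q = 0" and cp: "c p \<noteq> 0" by (auto simp: r2_def split: if_splits)
      have "p \<in> {-K..K}" using cp cL cU by (metis atLeastAtMost_iff linorder_not_le)
      then show "z \<in> (\<lambda>p. (p, -p)) ` {-K..K}" using pq zz by (auto simp: image_iff)
    qed
  qed simp
  have fin2: "finite {z. D2 m z \<noteq> 0}" for m
    unfolding D2_def by (intro fin_diff fin fin_Lact fr2)
  have D2e: "D2 m (p,q) = (if p + q = m then e m p else 0)" for m p q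
  proof (cases "p + q = m")
    case True
    then have "q = m - p" by simp
    then show ?thesis by (simp add: e_def)
  next
    case False
    then show ?thesis using hom2 by simp
  qed
  have e2z: "e 2 p = 0" for p using e2 u0 by simp
  have D21: "D2 1 = (\<lambda>z. 0)" by (rule ext) (auto simp: D2e u0)
  have D22: "D2 2 = (\<lambda>z. 0)" by (rule ext) (auto simp: D2e e2z)
  have Lz: "Lact m (\<lambda>z. 0) z = 0" for m z by (cases z) (simp add: Lact_apply)
  have pos: "D2 (int k + 1) = (\<lambda>z. 0) \<and> D2 (int k + 2) = (\<lambda>z. 0)" for k :: nat
  proof (induction k)
    case 0
    then show ?case using D21 D22 by simp
  next
    case (Suc k)
    have "D2 (int k + 3) = (\<lambda>z. 0)"
    proof
      fix z
      have "of_int (1 - (int k + 2)) * D2 (1 + (int k + 2)) z = Lact 1 (D2 (int k + 2)) z - Lact (int k + 2) (D2 1) z"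
        using cc2 unfolding cocyc_def by blast
      then have "of_int (1 - (int k + 2)) * D2 (int k + 3) z = 0"
        using Suc.IH D21 Lz by (simp add: add.commute)
      moreover have "of_int (1 - (int k + 2)) \<noteq> (0::complex)" by (simp only: of_int_eq_0_iff)
      ultimately show "D2 (int k + 3) z = 0" by simp
    qed
    then show ?case using Suc.IH by (simp add: add.commute)
  qed
  have posz: "D2 n = (\<lambda>z. 0)" if "n \<ge> 1" for n
  proof -
    have "n = int (nat (n - 1)) + 1" using that by simp
    then show ?thesis using pos[of "nat (n-1)"] by metis
  qed
  have allz: "D2 n = (\<lambda>z. 0)" for n
  proof (cases "n \<ge> 1")
    case True
    then show ?thesis by (rule posz)
  next
    case False
    show ?thesis
    proof (rule kill[where mz="1 - n", OF fin2])
      fix m assume m: "m \<ge> 1 - n"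
      show "Lact m (D2 n) = (\<lambda>z. 0)"
      proof
        fix z
        have "of_int (m-n) * D2 (m+n) z = Lact m (D2 n) z - Lact n (D2 m) z"
          using cc2 unfolding cocyc_def by blast
        moreover have "D2 (m+n) = (\<lambda>z. 0)" "D2 m = (\<lambda>z. 0)" using posz m False by auto
        ultimately show "Lact m (D2 n) z = 0" using Lz by simp
      qed
    qed
  qed
  have "D1 m = Lact m r2" for m
  proof
    fix z
    have "D2 m z = 0" using allz by simp
    then show "D1 m z = Lact m r2 z" by (simp add: D2_def)
  qed
  then show ?thesis using fr2 by blast
qed

lemma core:
  fixes D :: "int \<Rightarrow> int \<times> int \<Rightarrow> complex"
  assumes fin: "\<And>m. finite {z. D m z \<noteq> 0}" and cc: "cocyc D"
  shows "\<exists>r. finite {z. r z \<noteq> 0} \<and> (\<forall>m. D m = Lact m r)"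
proof -
  obtain r1 where fr1: "finite {z. r1 z \<noteq> 0}"
    and h1: "\<forall>m p q. p + q \<noteq> m \<longrightarrow> D m (p,q) - Lact m r1 (p,q) = 0"
    and h2: "\<forall>z. D 0 z - Lact 0 r1 z = 0"
    using stepA[OF fin cc] by blast
  define D1 where "D1 = (\<lambda>m z. D m z - Lact m r1 z)"
  have "\<exists>r2. finite {z. r2 z \<noteq> 0} \<and> (\<forall>m. D1 m = Lact m r2)"
  proof (rule stepB)
    show "finite {z. D1 m z \<noteq> 0}" for m unfolding D1_def by (intro fin_diff fin fin_Lact fr1)
    show "cocyc D1" unfolding D1_def by (rule cocyc_sub[OF cc])
    show "D1 m (p,q) = 0" if "p + q \<noteq> m" for m p q using h1 that unfolding D1_def by blast
    show "D1 0 z = 0" for z using h2 unfolding D1_def by blast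
  qed
  then obtain r2 where fr2: "finite {z. r2 z \<noteq> 0}" and h3: "\<forall>m. D1 m = Lact m r2" by blast
  have hD: "\<forall>m. D m = Lact m (\<lambda>z. r1 z + r2 z)"
  proof
    fix m show "D m = Lact m (\<lambda>z. r1 z + r2 z)"
  proof
    fix z
    have "D1 m z = Lact m r2 z" using h3 by simp
    then show "D m z = Lact m (\<lambda>z. r1 z + r2 z) z" unfolding Lact_add D1_def by (simp add: algebra_simps)
  qed
  qed
  have "finite {z. r1 z + r2 z \<noteq> 0}" by (rule fin_add[OF fr1 fr2])
  then show ?thesis using hD by (intro exI[of _ "(\<lambda>z. r1 z + r2 z)"] conjI)
qed

lemma core_anti:
  fixes D :: "int \<Rightarrow> int \<times> int \<Rightarrow> complex"
  assumes fin: "\<And>m. finite {z. D m z \<noteq> 0}" and cc: "cocyc D"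
    and anti: "\<And>m p q. D m (q,p) = - D m (p,q)"
  shows "\<exists>r. finite {z. r z \<noteq> 0} \<and> (\<forall>p q. r (q,p) = - r (p,q)) \<and> (\<forall>m. D m = Lact m r)"
proof -
  obtain r where fr: "finite {z. r z \<noteq> 0}" and hr: "\<forall>m. D m = Lact m r" using core[OF fin cc] by blast
  define r' where "r' = (\<lambda>(p,q). (r (p,q) - r (q,p)) / 2)"
  have "{z. r' z \<noteq> 0} \<subseteq> {z. r z \<noteq> 0} \<union> (\<lambda>(p,q). (q,p)) ` {z. r z \<noteq> 0}"
  proof
    fix z assume "z \<in> {z. r' z \<noteq> 0}"
    obtain p q where zz: "z = (p,q)" by (cases z)
    with \<open>z \<in> {z. r' z \<noteq> 0}\<close> have "r (p,q) \<noteq> 0 \<or> r (q,p) \<noteq> 0"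
      by (auto simp: r'_def)
    then show "z \<in> {z. r z \<noteq> 0} \<union> (\<lambda>(p,q). (q,p)) ` {z. r z \<noteq> 0}"
      unfolding zz by (auto simp: image_iff)
  qed
  moreover have "finite ({z. r z \<noteq> 0} \<union> (\<lambda>(p,q). (q,p)) ` {z. r z \<noteq> 0})" using fr by simp
  ultimately have fr': "finite {z. r' z \<noteq> 0}" by (rule finite_subset)
  have an: "r' (q,p) = - r' (p,q)" for p q by (simp add: r'_def field_simps)
  have "D m = Lact m r'" for m
  proof
    fix z :: "int \<times> int"
    obtain p q where zz: "z = (p,q)" by (cases z)
    have "Lact m r' (p,q) = (Lact m r (p,q) - Lact m r (q,p)) / 2"
      by (simp add: Lact_apply r'_def field_simps)
    also have "\<dots> = (D m (p,q) - D m (q,p)) / 2" using hr by simp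
    also have "\<dots> = D m (p,q)" using anti[of m q p] by simp
    finally show "D m z = Lact m r' z" by (simp add: zz)
  qed
  then show ?thesis using fr' an by blast
qed

lemma supp_L: "{k. L m k \<noteq> 0} = {m}" by (auto simp: L_def)

lemma L_witt: "L m \<in> witt" by (simp add: witt_def supp_L)

lemma wbr_L: "wbr (L m) b = (\<lambda>k. of_int (2*m-k) * b (k-m))"
  by (rule ext) (simp add: wbr_def supp_L L_def algebra_simps)

lemma wbr_LL: "wbr (L m) (L n) = (\<lambda>k. of_int (m-n) * L (m+n) k)"
  unfolding wbr_L by (rule ext) (auto simp: L_def)

lemma sdelta:
  fixes t :: "'a \<Rightarrow> complex"
  assumes "finite {z. t z \<noteq> 0}"
  shows "(\<Sum>z\<in>{z. t z \<noteq> 0}. t z * (if z = a then 1 else 0)) = t a"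
proof -
  have "(\<Sum>z\<in>{z. t z \<noteq> 0}. t z * (if z = a then 1 else 0)) = (\<Sum>z\<in>{z. t z \<noteq> 0}. if z = a then t z else 0)"
    by (rule sum.cong) auto
  also have "\<dots> = t a" using assms by (simp add: sum.delta)
  finally show ?thesis .
qed

lemma act_L:
  assumes fin: "finite {z. t z \<noteq> 0}"
  shows "act (L m) t = Lact m t"
proof
  fix z :: "int \<times> int"
  obtain p q where zz: "z = (p,q)" by (cases z)
  have summ: "(case w of (i, j) \<Rightarrow> t (i,j) * (tens (wbr (L m) (L i)) (L j) (p,q) + tens (L i) (wbr (L m) (L j)) (p,q)))
     = of_int (2*m-p) * (t w * (if w = (p-m,q) then 1 else 0)) + of_int (2*m-q) * (t w * (if w = (p,q-m) then 1 else 0))" for w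
    unfolding wbr_L by (cases w) (auto simp: tens_def L_def algebra_simps)
  have "act (L m) t (p,q) = (\<Sum>w\<in>{w. t w \<noteq> 0}. of_int (2*m-p) * (t w * (if w = (p-m,q) then 1 else 0))
      + of_int (2*m-q) * (t w * (if w = (p,q-m) then 1 else 0)))"
    unfolding act_def using summ by simp
  also have "\<dots> = of_int (2*m-p) * t (p-m,q) + of_int (2*m-q) * t (p,q-m)"
    by (simp add: sum.distrib sum_distrib_left[symmetric] sdelta[OF fin])
  finally show "act (L m) t z = Lact m t z" by (simp add: zz Lact_apply)
qed

lemma witt_decomp:
  assumes "x \<in> witt"
  shows "x = (\<lambda>k. \<Sum>m\<in>{m. x m \<noteq> 0}. x m * L m k)"
proof
  fix k
  have fin: "finite {m. x m \<noteq> 0}" using assms by (simp add: witt_def)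
  have "(\<Sum>m\<in>{m. x m \<noteq> 0}. x m * L m k) = (\<Sum>m\<in>{m. x m \<noteq> 0}. if k = m then x m else 0)"
    by (rule sum.cong) (auto simp: L_def)
  also have "\<dots> = x k" using fin by simp
  finally show "x k = (\<Sum>m\<in>{m. x m \<noteq> 0}. x m * L m k)" by simp
qed

lemma sum_witt:
  assumes "finite A"
  shows "(\<lambda>k. \<Sum>m\<in>A. a m * L m k) \<in> witt"
proof -
  have "{k. (\<Sum>m\<in>A. a m * L m k) \<noteq> 0} \<subseteq> A"
  proof
    fix k assume "k \<in> {k. (\<Sum>m\<in>A. a m * L m k) \<noteq> 0}"
    then have "(\<Sum>m\<in>A. a m * L m k) \<noteq> 0" by simp
    then obtain m where "m \<in> A" "a m * L m k \<noteq> 0"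
      by (rule sum.not_neutral_contains_not_neutral)
    moreover then have "k = m" by (simp add: L_def split: if_splits)
    ultimately show "k \<in> A" by simp
  qed
  then have "finite {k. (\<Sum>m\<in>A. a m * L m k) \<noteq> 0}" using assms by (rule finite_subset)
  then show ?thesis unfolding witt_def by simp
qed

lemma wbr_lin:
  assumes "x \<in> witt"
  shows "wbr x b k = (\<Sum>m\<in>{m. x m \<noteq> 0}. x m * wbr (L m) b k)"
  apply (simp only: wbr_L)
  unfolding wbr_def by (rule sum.cong) (auto simp: algebra_simps)

lemma act_lin:
  assumes "x \<in> witt"
  shows "act x t z = (\<Sum>m\<in>{m. x m \<noteq> 0}. x m * act (L m) t z)"
proof -
  obtain p q where zz: "z = (p,q)" by (cases z)
  have "act x t (p,q) = (\<Sum>w\<in>{w. t w \<noteq> 0}. \<Sum>m\<in>{m. x m \<noteq> 0}. x m *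
        (case w of (i,j) \<Rightarrow> t (i,j) * (tens (wbr (L m) (L i)) (L j) (p,q) + tens (L i) (wbr (L m) (L j)) (p,q))))"
    unfolding act_def
  proof (rule sum.cong)
    fix w :: "int \<times> int"
    obtain i j where ww: "w = (i,j)" by (cases w)
    show "(case w of (i, j) \<Rightarrow> t (i, j) * (tens (wbr x (L i)) (L j) (p, q) + tens (L i) (wbr x (L j)) (p, q))) =
      (\<Sum>m\<in>{m. x m \<noteq> 0}. x m * (case w of (i, j) \<Rightarrow> t (i, j) * (tens (wbr (L m) (L i)) (L j) (p, q) + tens (L i) (wbr (L m) (L j)) (p, q))))"
      unfolding ww tens_def using wbr_lin[OF assms]
      by (simp add: sum_distrib_left sum_distrib_right sum.distrib algebra_simps)
  qed simp
  also have "\<dots> = (\<Sum>m\<in>{m. x m \<noteq> 0}. x m * act (L m) t (p,q))"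
    unfolding act_def by (subst sum.swap) (simp add: sum_distrib_left)
  finally show ?thesis by (simp add: zz)
qed

lemma ext2_fin:
  assumes "t \<in> ext2"
  shows "finite {z. t z \<noteq> 0}"
proof -
  from assms obtain S c where fS: "finite S" and sub: "S \<subseteq> witt \<times> witt"
    and tt: "t = (\<lambda>p. \<Sum>(a, b)\<in>S. c (a, b) * wedge a b p)"
    unfolding ext2_def by blast
  let ?U = "(\<Union>w\<in>S. ({k. fst w k \<noteq> 0} \<times> {k. snd w k \<noteq> 0}) \<union> ({k. snd w k \<noteq> 0} \<times> {k. fst w k \<noteq> 0}))"
  have "{z. t z \<noteq> 0} \<subseteq> ?U"
  proof
    fix z :: "int \<times> int" assume "z \<in> {z. t z \<noteq> 0}"
    then have "(\<Sum>(a, b)\<in>S. c (a, b) * wedge a b z) \<noteq> 0" by (simp add: tt)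
    then obtain w where wS: "w \<in> S" and nz: "(case w of (a,b) \<Rightarrow> c (a, b) * wedge a b z) \<noteq> 0"
      by (rule sum.not_neutral_contains_not_neutral)
    obtain a b where ww: "w = (a,b)" by (cases w)
    obtain p q where zz: "z = (p,q)" by (cases z)
    from nz have "a p * b q - b p * a q \<noteq> 0" by (simp add: ww zz wedge_def tens_def)
    then have "(a p \<noteq> 0 \<and> b q \<noteq> 0) \<or> (b p \<noteq> 0 \<and> a q \<noteq> 0)" by auto
    then show "z \<in> ?U" using wS unfolding ww zz by (intro UN_I[of "(a,b)"]) auto
  qed
  moreover have "finite ?U"
  proof (rule finite_UN_I[OF fS])
    fix w assume "w \<in> S"
    then have "fst w \<in> witt" "snd w \<in> witt" using sub by auto
    then show "finite (({k. fst w k \<noteq> 0} \<times> {k. snd w k \<noteq> 0}) \<union> ({k. snd w k \<noteq> 0} \<times> {k. fst w k \<noteq> 0}))"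
      by (simp add: witt_def)
  qed
  ultimately show ?thesis by (rule finite_subset)
qed

lemma ext2_anti:
  assumes "t \<in> ext2"
  shows "t (q,p) = - t (p,q)"
proof -
  from assms obtain S c where tt: "t = (\<lambda>p. \<Sum>(a, b)\<in>S. c (a, b) * wedge a b p)"
    unfolding ext2_def by blast
  have "(\<Sum>(a, b)\<in>S. c (a, b) * wedge a b (q,p)) = (\<Sum>w\<in>S. - (case w of (a, b) \<Rightarrow> c (a, b) * wedge a b (p,q)))"
    by (rule sum.cong) (auto simp: wedge_def tens_def algebra_simps)
  also have "\<dots> = - (\<Sum>(a, b)\<in>S. c (a, b) * wedge a b (p,q))" by (simp add: sum_negf)
  finally show ?thesis by (simp add: tt)
qed

lemma inj_L: "inj L"
proof (rule injI)
  fix i j assume "L i = L j"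
  then have "L i i = L j i" by simp
  then show "i = j" by (simp add: L_def split: if_splits)
qed

lemma wedge_LL: "wedge (L i) (L j) (p,q) = (if (i,j) = (p,q) then 1 else 0) - (if (i,j) = (q,p) then 1 else 0)"
proof -
  have "wedge (L i) (L j) (p,q) = L i p * L j q - L j p * L i q" by (simp add: wedge_def tens_def)
  also have "\<dots> = (if (i,j) = (p,q) then 1 else 0) - (if (i,j) = (q,p) then 1 else 0)"
    unfolding L_def by (cases "p = i"; cases "q = j"; cases "q = i"; cases "p = j") auto
  finally show ?thesis .
qed

lemma ext2_intro:
  assumes fin: "finite {z. t z \<noteq> 0}" and anti: "\<And>p q. t (q,p) = - t (p,q)"
  shows "t \<in> ext2"
proof -
  define f where "f = (\<lambda>(i::int, j::int). (L i, L j))"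
  define S where "S = f ` {z. t z \<noteq> 0}"
  define c where "c = (\<lambda>(a, b). t (inv L a, inv L b) / 2)"
  have injf: "inj_on f {z. t z \<noteq> 0}"
  proof (rule inj_onI)
    fix v w assume "v \<in> {z. t z \<noteq> 0}" "w \<in> {z. t z \<noteq> 0}" and fe: "f v = f w"
    obtain i j where vv: "v = (i,j)" by (cases v)
    obtain i' j' where ww: "w = (i',j')" by (cases w)
    from fe have "L i = L i'" "L j = L j'" by (simp_all add: f_def vv ww)
    then have "i = i'" "j = j'" using injD[OF inj_L] by blast+
    then show "v = w" by (simp add: vv ww)
  qed
  have fS: "finite S" unfolding S_def using fin by simp
  have sub: "S \<subseteq> witt \<times> witt" unfolding S_def f_def by (auto simp: L_witt)
  have teq: "t = (\<lambda>z. \<Sum>(a, b)\<in>S. c (a, b) * wedge a b z)"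
  proof
    fix z :: "int \<times> int"
    obtain p q where zz: "z = (p,q)" by (cases z)
    have "(\<Sum>(a, b)\<in>S. c (a, b) * wedge a b z) = (\<Sum>v\<in>{z. t z \<noteq> 0}. (case f v of (a, b) \<Rightarrow> c (a, b) * wedge a b z))"
      unfolding S_def by (rule sum.reindex[OF injf, unfolded comp_def])
    also have "\<dots> = (\<Sum>v\<in>{z. t z \<noteq> 0}. (t v * (if v = (p,q) then 1 else 0)) / 2 - (t v * (if v = (q,p) then 1 else 0)) / 2)"
    proof (rule sum.cong)
      fix v :: "int \<times> int"
      obtain i j where vv: "v = (i,j)" by (cases v)
      have cf: "c (L i, L j) = t v / 2" by (simp add: vv c_def inv_f_f[OF inj_L])
      have wf: "wedge (L i) (L j) (p,q) = (if v = (p,q) then 1 else 0) - (if v = (q,p) then 1 else 0)"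
        unfolding vv by (rule wedge_LL)
      show "(case f v of (a, b) \<Rightarrow> c (a, b) * wedge a b z) = (t v * (if v = (p,q) then 1 else 0)) / 2 - (t v * (if v = (q,p) then 1 else 0)) / 2"
      proof -
        have "f v = (L i, L j)" by (simp add: f_def vv)
        then show ?thesis unfolding zz by (simp add: cf wf algebra_simps)
      qed
    qed simp
    also have "\<dots> = t (p,q) / 2 - t (q,p) / 2"
      by (simp add: sum_subtractf sum_divide_distrib[symmetric] sdelta[OF fin])
    also have "\<dots> = t z" using anti[of q p] by (simp add: zz)
    finally show "t z = (\<Sum>(a, b)\<in>S. c (a, b) * wedge a b z)" by simp
  qed
  show ?thesis unfolding ext2_def
    by (rule CollectI, rule exI[of _ S], rule exI[of _ c]) (intro conjI fS sub teq)
qed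

lemma delta_sum:
  fixes \<delta> :: "(int \<Rightarrow> complex) \<Rightarrow> (int \<times> int \<Rightarrow> complex)"
  assumes add: "\<forall>x\<in>witt. \<forall>y\<in>witt. \<delta> (\<lambda>k. x k + y k) = (\<lambda>p. \<delta> x p + \<delta> y p)"
    and scal: "\<forall>c. \<forall>x\<in>witt. \<delta> (\<lambda>k. c * x k) = (\<lambda>p. c * \<delta> x p)"
    and fA: "finite A"
  shows "\<delta> (\<lambda>k. \<Sum>m\<in>A. a m * L m k) = (\<lambda>z. \<Sum>m\<in>A. a m * \<delta> (L m) z)"
  using fA
proof (induction A rule: finite_induct)
  case empty
  have "\<delta> (\<lambda>k. 0 * L 0 k) = (\<lambda>p. 0 * \<delta> (L 0) p)" using scal L_witt by blast
  then show ?case by simp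
next
  case (insert b A)
  have w1: "(\<lambda>k. a b * L b k) \<in> witt" using sum_witt[of "{b}" a] by simp
  have w2: "(\<lambda>k. \<Sum>m\<in>A. a m * L m k) \<in> witt" using sum_witt[OF insert(1)] by simp
  have "\<delta> (\<lambda>k. \<Sum>m\<in>insert b A. a m * L m k) = \<delta> (\<lambda>k. a b * L b k + (\<Sum>m\<in>A. a m * L m k))"
    using insert(1,2) by simp
  also have "\<dots> = (\<lambda>p. \<delta> (\<lambda>k. a b * L b k) p + \<delta> (\<lambda>k. \<Sum>m\<in>A. a m * L m k) p)"
    using add[rule_format, OF w1 w2] by simp
  also have "\<delta> (\<lambda>k. a b * L b k) = (\<lambda>p. a b * \<delta> (L b) p)" using scal L_witt by blast
  finally show ?case using insert by simp
qed


theorem theorem1: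
  fixes \<delta> :: "(int \<Rightarrow> complex) \<Rightarrow> (int \<times> int \<Rightarrow> complex)"
  assumes maps: "\<forall>x\<in>witt. \<delta> x \<in> ext2"
    and add: "\<forall>x\<in>witt. \<forall>y\<in>witt. \<delta> (\<lambda>k. x k + y k) = (\<lambda>p. \<delta> x p + \<delta> y p)"
    and scal: "\<forall>c. \<forall>x\<in>witt. \<delta> (\<lambda>k. c * x k) = (\<lambda>p. c * \<delta> x p)"
    and cocycle: "\<forall>x\<in>witt. \<forall>y\<in>witt.
                    \<delta> (wbr x y) = (\<lambda>p. act x (\<delta> y) p - act y (\<delta> x) p)"
  shows "\<exists>r\<in>ext2. \<forall>x\<in>witt. \<delta> x = act x r"
proof -
  define D where "D = (\<lambda>m. \<delta> (L m))"
  have De: "D m \<in> ext2" for m using maps L_witt unfolding D_def by blast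
  have finD: "finite {z. D m z \<noteq> 0}" for m by (rule ext2_fin[OF De])
  have antiD: "D m (q,p) = - D m (p,q)" for m p q by (rule ext2_anti[OF De])
  have ccD: "cocyc D"
    unfolding cocyc_def
  proof (intro allI)
    fix m n z
    have "\<delta> (wbr (L m) (L n)) = (\<lambda>p. act (L m) (\<delta> (L n)) p - act (L n) (\<delta> (L m)) p)"
      using cocycle L_witt by blast
    moreover have "\<delta> (wbr (L m) (L n)) = (\<lambda>p. of_int (m-n) * \<delta> (L (m+n)) p)"
      unfolding wbr_LL using scal L_witt by blast
    ultimately have "of_int (m-n) * D (m+n) z = act (L m) (D n) z - act (L n) (D m) z"
      unfolding D_def by metis
    then show "of_int (m-n) * D (m+n) z = Lact m (D n) z - Lact n (D m) z"
      using act_L[OF finD] by simp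
  qed
  obtain r where fr: "finite {z. r z \<noteq> 0}" and ar: "\<forall>p q. r (q,p) = - r (p,q)"
    and hr: "\<forall>m. D m = Lact m r"
    using core_anti[OF finD ccD antiD] by blast
  have rext: "r \<in> ext2" using ext2_intro[OF fr] ar by blast
  have "\<delta> x = act x r" if x: "x \<in> witt" for x
  proof -
    have fx: "finite {m. x m \<noteq> 0}" using x by (simp add: witt_def)
    have "\<delta> x = \<delta> (\<lambda>k. \<Sum>m\<in>{m. x m \<noteq> 0}. x m * L m k)" using witt_decomp[OF x] by simp
    also have "\<dots> = (\<lambda>z. \<Sum>m\<in>{m. x m \<noteq> 0}. x m * \<delta> (L m) z)"
      by (rule delta_sum[OF add scal fx])
    also have "\<dots> = (\<lambda>z. \<Sum>m\<in>{m. x m \<noteq> 0}. x m * act (L m) r z)"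
      using hr act_L[OF fr] unfolding D_def by simp
    also have "\<dots> = act x r" by (rule ext) (simp add: act_lin[OF x])
    finally show ?thesis .
  qed
  then show ?thesis using rext by blast
qed

end
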